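(* Let $G$ be a group and let $A\subseteq \operatorname{Aut}(G)$ be a subgroup of automorphisms, and regard $G$ as an $\mathcal{L}(A)$-group. Then $G$ is an $\mathcal{L}(A)$-equational domain if and only if there do not exist $a,b\in G$ with $a\neq 1$, $b\neq 1$ such that $[a,\phi(b)]=1$ for every $\phi\in A$.
   Context: $\mathcal{L}(A)=\{\cdot,{}^{-1},1\}\cup\{\phi\mid \phi\in A\}$ is the group language extended by unary function symbols, one for each $\phi\in A$, interpreted in $G$ as the automorphism $\phi$. An $\mathcal{L}(A)$-term in variables $X=\{x_1,\dots,x_n\}$ is a term of this language; up to equivalence it is a product $\phi_1(x_{i_1}^{\varepsilon_1})\cdots\phi_k(x_{i_k}^{\varepsilon_k})$ with $\phi_j\in A$, $\varepsilon_j\in\{-1,1\}$. An $\mathcal{L}(A)$-equation is $t(X)=1$ for an $\mathcal{L}(A)$-term $t$; an $\mathcal{L}(A)$-system is any set of such equations, and $V_G(S)\subseteq G^n$ denotes its solution set. A subset of $G^n$ is $\mathcal{L}(A)$-algebraic if it equals $V_G(S)$ for some $\mathcal{L}(A)$-system $S$ in $n$ variables. $G$ is an $\mathcal{L}(A)$-equational domain if for every $n$ and all $\mathcal{L}(A)$-algebraic $Y_1,Y_2\subseteq G^n$, the union $Y_1\cup Y_2$ is $\mathcal{L}(A)$-algebraic. Here $[x,y]=x^{-1}y^{-1}xy$. *)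

theory Defs
  imports "HOL-Algebra.Algebra"
begin

text \<open>Function symbols are the automorphisms themselves (maps 'a => 'a);
  a term is an L(A)-term when all of its function symbols lie in A.\<close>
datatype 'f lterm =
    Var nat
  | One
  | Mul "'f lterm" "'f lterm"
  | Inv "'f lterm"
  | App 'f "'f lterm"

fun tvars :: "'f lterm \<Rightarrow> nat set" where
  "tvars (Var i) = {i}"
| "tvars One = {}"
| "tvars (Mul s t) = tvars s \<union> tvars t"
| "tvars (Inv t) = tvars t"
| "tvars (App f t) = tvars t"

fun tfuns :: "'f lterm \<Rightarrow> 'f set" where
  "tfuns (Var i) = {}"
| "tfuns One = {}"
| "tfuns (Mul s t) = tfuns s \<union> tfuns t"
| "tfuns (Inv t) = tfuns t"
| "tfuns (App f t) = insert f (tfuns t)"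

fun teval :: "('a, 'b) monoid_scheme \<Rightarrow> 'a list \<Rightarrow> ('a \<Rightarrow> 'a) lterm \<Rightarrow> 'a" where
  "teval G xs (Var i) = xs ! i"
| "teval G xs One = \<one>\<^bsub>G\<^esub>"
| "teval G xs (Mul s t) = teval G xs s \<otimes>\<^bsub>G\<^esub> teval G xs t"
| "teval G xs (Inv t) = inv\<^bsub>G\<^esub> (teval G xs t)"
| "teval G xs (App f t) = f (teval G xs t)"

definition is_LA_term :: "('a \<Rightarrow> 'a) set \<Rightarrow> nat \<Rightarrow> ('a \<Rightarrow> 'a) lterm \<Rightarrow> bool" where
  "is_LA_term A n t \<longleftrightarrow> tvars t \<subseteq> {..<n} \<and> tfuns t \<subseteq> A"

definition Gpow :: "('a, 'b) monoid_scheme \<Rightarrow> nat \<Rightarrow> 'a list set" where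
  "Gpow G n = {xs. length xs = n \<and> set xs \<subseteq> carrier G}"

text \<open>Solution set of a system S (a set of terms t, standing for equations t = 1).\<close>
definition VG :: "('a, 'b) monoid_scheme \<Rightarrow> nat \<Rightarrow> ('a \<Rightarrow> 'a) lterm set \<Rightarrow> 'a list set" where
  "VG G n S = {xs \<in> Gpow G n. \<forall>t\<in>S. teval G xs t = \<one>\<^bsub>G\<^esub>}"

definition LA_algebraic ::
  "('a, 'b) monoid_scheme \<Rightarrow> ('a \<Rightarrow> 'a) set \<Rightarrow> nat \<Rightarrow> 'a list set \<Rightarrow> bool" where
  "LA_algebraic G A n Y \<longleftrightarrow> (\<exists>S. (\<forall>t\<in>S. is_LA_term A n t) \<and> Y = VG G n S)"

definition LA_equational_domain :: "('a, 'b) monoid_scheme \<Rightarrow> ('a \<Rightarrow> 'a) set \<Rightarrow> bool" where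
  "LA_equational_domain G A \<longleftrightarrow>
     (\<forall>n Y1 Y2. LA_algebraic G A n Y1 \<and> LA_algebraic G A n Y2 \<longrightarrow>
                LA_algebraic G A n (Y1 \<union> Y2))"

definition commutator :: "('a, 'b) monoid_scheme \<Rightarrow> 'a \<Rightarrow> 'a \<Rightarrow> 'a" where
  "commutator G x y = inv\<^bsub>G\<^esub> x \<otimes>\<^bsub>G\<^esub> inv\<^bsub>G\<^esub> y \<otimes>\<^bsub>G\<^esub> x \<otimes>\<^bsub>G\<^esub> y"

end

theory Submission
  imports Defs
begin

lemma comm_of_commutator:
  fixes G (structure)
  assumes "group G" "x \<in> carrier G" "y \<in> carrier G"
  shows "commutator G x y = \<one>\<^bsub>G\<^esub> \<longleftrightarrow> x \<otimes>\<^bsub>G\<^esub> y = y \<otimes>\<^bsub>G\<^esub> x"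
proof -
  interpret group G by fact
  have "commutator G x y = inv (y \<otimes> x) \<otimes> (x \<otimes> y)"
    using assms by (simp add: commutator_def inv_mult_group m_assoc)
  also have "\<dots> = \<one> \<longleftrightarrow> x \<otimes> y = y \<otimes> x"
    using assms by (metis inv_closed inv_equality inv_inv m_closed r_inv)
  finally show ?thesis .
qed

lemma comm_inv:
  fixes G (structure)
  assumes "group G" "x \<in> carrier G" "y \<in> carrier G" "x \<otimes>\<^bsub>G\<^esub> y = y \<otimes>\<^bsub>G\<^esub> x"
  shows "inv\<^bsub>G\<^esub> x \<otimes>\<^bsub>G\<^esub> y = y \<otimes>\<^bsub>G\<^esub> inv\<^bsub>G\<^esub> x"
proof -
  interpret group G by fact
  have "inv x \<otimes> y = inv x \<otimes> (y \<otimes> x) \<otimes> inv x"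
    using assms by (metis m_assoc inv_closed m_closed r_inv r_one)
  also have "\<dots> = inv x \<otimes> (x \<otimes> y) \<otimes> inv x" using assms by simp
  also have "\<dots> = (inv x \<otimes> x) \<otimes> y \<otimes> inv x" using assms by (metis m_assoc inv_closed)
  also have "\<dots> = y \<otimes> inv x" using assms by simp
  finally show ?thesis .
qed

context
  fixes G :: "('a, 'b) monoid_scheme" and A :: "('a \<Rightarrow> 'a) set"
  assumes grp: "group G"
    and sub: "subgroup A (AutoGroup G)"
begin

lemma A_hom: "\<phi> \<in> A \<Longrightarrow> \<phi> \<in> hom G G"
  using subgroup.subset[OF sub] by (auto simp: AutoGroup_def auto_def)

lemma A_Bij: "\<phi> \<in> A \<Longrightarrow> \<phi> \<in> Bij (carrier G)"
  using subgroup.subset[OF sub] by (auto simp: AutoGroup_def auto_def)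

lemma A_closed: "\<phi> \<in> A \<Longrightarrow> x \<in> carrier G \<Longrightarrow> \<phi> x \<in> carrier G"
  using A_hom by (auto simp: hom_def)

lemma A_mult: "\<phi> \<in> A \<Longrightarrow> x \<in> carrier G \<Longrightarrow> y \<in> carrier G \<Longrightarrow>
   \<phi> (x \<otimes>\<^bsub>G\<^esub> y) = \<phi> x \<otimes>\<^bsub>G\<^esub> \<phi> y"
  using A_hom by (auto simp: hom_def)

lemma A_one: "\<phi> \<in> A \<Longrightarrow> \<phi> \<one>\<^bsub>G\<^esub> = \<one>\<^bsub>G\<^esub>"
  using A_hom grp by (simp add: group_hom.hom_one group_hom_axioms_def group_hom_def)

lemma A_inv: "\<phi> \<in> A \<Longrightarrow> x \<in> carrier G \<Longrightarrow> \<phi> (inv\<^bsub>G\<^esub> x) = inv\<^bsub>G\<^esub> (\<phi> x)"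
  using A_hom grp by (simp add: group_hom.hom_inv group_hom_axioms_def group_hom_def)

lemma A_comp: "\<phi> \<in> A \<Longrightarrow> \<psi> \<in> A \<Longrightarrow> x \<in> carrier G \<Longrightarrow>
   (\<phi> \<otimes>\<^bsub>AutoGroup G\<^esub> \<psi>) x = \<phi> (\<psi> x)"
  using A_Bij by (simp add: AutoGroup_def BijGroup_def compose_def)

lemma A_id: "(\<lambda>x\<in>carrier G. x) \<in> A"
  using subgroup.one_closed[OF sub] by (simp add: AutoGroup_def BijGroup_def)

lemma A_solve: "\<phi> \<in> A \<Longrightarrow> \<psi> \<in> A \<Longrightarrow> \<exists>\<chi>\<in>A. \<forall>x\<in>carrier G. \<psi> (\<chi> x) = \<phi> x"
proof -
  assume p: "\<phi> \<in> A" and q: "\<psi> \<in> A"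
  interpret AG: group "AutoGroup G" using grp by (simp add: group.AutoGroup)
  have sA: "A \<subseteq> carrier (AutoGroup G)" using subgroup.subset[OF sub] .
  define \<chi> where "\<chi> = inv\<^bsub>AutoGroup G\<^esub> \<psi> \<otimes>\<^bsub>AutoGroup G\<^esub> \<phi>"
  have c: "\<chi> \<in> A" unfolding \<chi>_def
    using p q sub by (simp add: subgroup.m_closed subgroup.m_inv_closed)
  have e: "\<psi> \<otimes>\<^bsub>AutoGroup G\<^esub> \<chi> = \<phi>" unfolding \<chi>_def
    using p q sA by (simp add: AG.m_assoc[symmetric] subsetD)
  show ?thesis using c e A_comp[OF q c] by metis
qed

lemma teval_closed:
  "set xs \<subseteq> carrier G \<Longrightarrow> tvars t \<subseteq> {..<length xs} \<Longrightarrow> tfuns t \<subseteq> A \<Longrightarrow>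
   teval G xs t \<in> carrier G"
proof (induction t)
  case (Var i) then show ?case by auto
next
  case One then show ?case using grp by (simp add: group.is_monoid monoid.one_closed)
next
  case (Mul s t) then show ?case using grp by (simp add: group.is_monoid monoid.m_closed)
next
  case (Inv t) then show ?case using grp by (simp add: group.inv_closed)
next
  case (App f t) then show ?case using A_closed by simp
qed

lemma teval_Q:
  assumes Qc: "Q \<subseteq> carrier G" and Q1: "\<one>\<^bsub>G\<^esub> \<in> Q"
    and Qm: "\<And>x y. x \<in> Q \<Longrightarrow> y \<in> Q \<Longrightarrow> x \<otimes>\<^bsub>G\<^esub> y \<in> Q"
    and Qi: "\<And>x. x \<in> Q \<Longrightarrow> inv\<^bsub>G\<^esub> x \<in> Q"
    and xs: "set xs \<subseteq> carrier G" "\<And>x \<psi>. x \<in> set xs \<Longrightarrow> \<psi> \<in> A \<Longrightarrow> \<psi> x \<in> Q"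
  shows "tvars t \<subseteq> {..<length xs} \<Longrightarrow> tfuns t \<subseteq> A \<Longrightarrow>
    \<forall>\<psi>\<in>A. \<psi> (teval G xs t) \<in> Q"
proof (induction t)
  case (Var i) then show ?case using xs by auto
next
  case One show ?case
  proof
    fix \<psi> assume "\<psi> \<in> A" then show "\<psi> (teval G xs One) \<in> Q" using A_one[of \<psi>] Q1 by simp
  qed
next
  case (Mul s t)
  show ?case
  proof
    fix \<psi> assume p: "\<psi> \<in> A"
    have "teval G xs s \<in> carrier G" "teval G xs t \<in> carrier G"
      using Mul teval_closed xs by auto
    then show "\<psi> (teval G xs (Mul s t)) \<in> Q" using A_mult[OF p] Mul p Qm by auto
  qed
next
  case (Inv t)
  show ?case
  proof
    fix \<psi> assume p: "\<psi> \<in> A"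
    have "teval G xs t \<in> carrier G"
      using Inv teval_closed xs by auto
    then show "\<psi> (teval G xs (Inv t)) \<in> Q" using A_inv[OF p] Inv p Qi by auto
  qed
next
  case (App f t)
  show ?case
  proof
    fix \<psi> assume p: "\<psi> \<in> A"
    have f: "f \<in> A" using App by simp
    have c: "teval G xs t \<in> carrier G" using App teval_closed xs by simp
    have "\<psi> \<otimes>\<^bsub>AutoGroup G\<^esub> f \<in> A" using p f sub by (simp add: subgroup.m_closed)
    then have "(\<psi> \<otimes>\<^bsub>AutoGroup G\<^esub> f) (teval G xs t) \<in> Q" using App by simp
    then show "\<psi> (teval G xs (App f t)) \<in> Q" using A_comp[OF p f c] by simp
  qed
qed

lemma teval_Q_id:
  assumes "Q \<subseteq> carrier G" "\<one>\<^bsub>G\<^esub> \<in> Q"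
    "\<And>x y. x \<in> Q \<Longrightarrow> y \<in> Q \<Longrightarrow> x \<otimes>\<^bsub>G\<^esub> y \<in> Q"
    "\<And>x. x \<in> Q \<Longrightarrow> inv\<^bsub>G\<^esub> x \<in> Q"
    "set xs \<subseteq> carrier G" "\<And>x \<psi>. x \<in> set xs \<Longrightarrow> \<psi> \<in> A \<Longrightarrow> \<psi> x \<in> Q"
    "tvars t \<subseteq> {..<length xs}" "tfuns t \<subseteq> A"
  shows "teval G xs t \<in> Q"
proof -
  have "(\<lambda>x\<in>carrier G. x) (teval G xs t) \<in> Q"
  proof -
    have "\<forall>\<psi>\<in>A. \<psi> (teval G xs t) \<in> Q"
      by (rule teval_Q[where Q=Q and xs=xs and t=t]) (rule assms; assumption?)+
    then show ?thesis using A_id by blast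
  qed
  then show ?thesis using teval_closed assms by simp
qed

definition cterm :: "('a \<Rightarrow> 'a) lterm \<Rightarrow> ('a \<Rightarrow> 'a) \<Rightarrow> ('a \<Rightarrow> 'a) lterm \<Rightarrow> ('a \<Rightarrow> 'a) lterm" where
  "cterm s \<phi> t = Mul (Mul (Mul (Inv s) (Inv (App \<phi> t))) s) (App \<phi> t)"

lemma teval_cterm: "teval G xs (cterm s \<phi> t) = commutator G (teval G xs s) (\<phi> (teval G xs t))"
  by (simp add: cterm_def commutator_def)

lemma Gpow_set: "xs \<in> Gpow G n \<Longrightarrow> set xs \<subseteq> carrier G \<and> length xs = n"
  by (simp add: Gpow_def)

lemma nozd_ED:
  assumes nz: "\<not> (\<exists>a\<in>carrier G. \<exists>b\<in>carrier G. a \<noteq> \<one>\<^bsub>G\<^esub> \<and> b \<noteq> \<one>\<^bsub>G\<^esub> \<and>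
              (\<forall>\<phi>\<in>A. commutator G a (\<phi> b) = \<one>\<^bsub>G\<^esub>))"
  shows "LA_equational_domain G A"
  unfolding LA_equational_domain_def
proof (intro allI impI)
  fix n Y1 Y2
  assume "LA_algebraic G A n Y1 \<and> LA_algebraic G A n Y2"
  then obtain S1 S2 where S1: "\<forall>t\<in>S1. is_LA_term A n t" "Y1 = VG G n S1"
    and S2: "\<forall>t\<in>S2. is_LA_term A n t" "Y2 = VG G n S2"
    unfolding LA_algebraic_def by blast
  define S where "S = {cterm s \<phi> t | s \<phi> t. s \<in> S1 \<and> \<phi> \<in> A \<and> t \<in> S2}"
  have SL: "\<forall>t\<in>S. is_LA_term A n t"
    using S1(1) S2(1) unfolding S_def cterm_def is_LA_term_def
    by (auto; blast)
  have "Y1 \<union> Y2 = VG G n S"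
  proof
    show "Y1 \<union> Y2 \<subseteq> VG G n S"
    proof
      fix xs assume xs: "xs \<in> Y1 \<union> Y2"
      then have g: "xs \<in> Gpow G n" using S1 S2 by (auto simp: VG_def)
      have cl: "\<And>t. t \<in> S1 \<union> S2 \<Longrightarrow> teval G xs t \<in> carrier G"
        using teval_closed Gpow_set[OF g] S1(1) S2(1) by (auto simp: is_LA_term_def)
      have "\<forall>u\<in>S. teval G xs u = \<one>\<^bsub>G\<^esub>"
      proof
        fix u assume "u \<in> S"
        then obtain s \<phi> t where u: "u = cterm s \<phi> t" "s \<in> S1" "\<phi> \<in> A" "t \<in> S2"
          by (auto simp: S_def)
        have cs: "teval G xs s \<in> carrier G" and ct: "teval G xs t \<in> carrier G"
          using cl u by auto
        have cp: "\<phi> (teval G xs t) \<in> carrier G" using A_closed u(3) ct by blast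
        show "teval G xs u = \<one>\<^bsub>G\<^esub>"
        proof (cases "xs \<in> Y1")
          case True
          then have "teval G xs s = \<one>\<^bsub>G\<^esub>" using S1(2) u(2) by (auto simp: VG_def)
          then show ?thesis using u(1) cp grp
            by (simp add: teval_cterm comm_of_commutator group.is_monoid monoid.l_one monoid.r_one)
        next
          case False
          then have "xs \<in> Y2" using xs by blast
          then have "teval G xs t = \<one>\<^bsub>G\<^esub>" using S2(2) u(4) by (auto simp: VG_def)
          then show ?thesis using u cs grp A_one[OF u(3)]
            by (simp add: teval_cterm comm_of_commutator group.is_monoid monoid.l_one monoid.r_one)
        qed
      qed
      then show "xs \<in> VG G n S" using g by (simp add: VG_def)
    qed
  next
    show "VG G n S \<subseteq> Y1 \<union> Y2"
    proof
      fix xs assume xs: "xs \<in> VG G n S"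
      then have g: "xs \<in> Gpow G n" by (simp add: VG_def)
      have cl: "\<And>t. t \<in> S1 \<union> S2 \<Longrightarrow> teval G xs t \<in> carrier G"
        using teval_closed Gpow_set[OF g] S1(1) S2(1) by (auto simp: is_LA_term_def)
      show "xs \<in> Y1 \<union> Y2"
      proof (rule ccontr)
        assume "xs \<notin> Y1 \<union> Y2"
        then obtain s t where st: "s \<in> S1" "teval G xs s \<noteq> \<one>\<^bsub>G\<^esub>" "t \<in> S2" "teval G xs t \<noteq> \<one>\<^bsub>G\<^esub>"
          using S1(2) S2(2) g by (auto simp: VG_def)
        have "\<forall>\<phi>\<in>A. commutator G (teval G xs s) (\<phi> (teval G xs t)) = \<one>\<^bsub>G\<^esub>"
        proof
          fix \<phi> assume "\<phi> \<in> A"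
          then have "cterm s \<phi> t \<in> S" using st by (auto simp: S_def)
          then show "commutator G (teval G xs s) (\<phi> (teval G xs t)) = \<one>\<^bsub>G\<^esub>"
            using xs by (auto simp: VG_def teval_cterm)
        qed
        then show False using nz st cl by blast
      qed
    qed
  qed
  then show "LA_algebraic G A n (Y1 \<union> Y2)"
    unfolding LA_algebraic_def using SL by blast
qed

lemma zd_not_ED:
  assumes a: "a \<in> carrier G" "a \<noteq> \<one>\<^bsub>G\<^esub>" and b: "b \<in> carrier G" "b \<noteq> \<one>\<^bsub>G\<^esub>"
    and ab: "\<forall>\<phi>\<in>A. commutator G a (\<phi> b) = \<one>\<^bsub>G\<^esub>"
  shows "\<not> LA_equational_domain G A"
proof
  interpret group G by (rule grp)
  assume ed: "LA_equational_domain G A"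
  define Y1 where "Y1 = VG G 2 {Var 0}"
  define Y2 where "Y2 = VG G 2 {Var 1}"
  have "LA_algebraic G A 2 Y1"
    unfolding LA_algebraic_def Y1_def by (rule exI[of _ "{Var 0}"]) (simp add: is_LA_term_def)
  moreover have "LA_algebraic G A 2 Y2"
    unfolding LA_algebraic_def Y2_def by (rule exI[of _ "{Var 1}"]) (simp add: is_LA_term_def)
  ultimately have "LA_algebraic G A 2 (Y1 \<union> Y2)" using ed by (simp add: LA_equational_domain_def)
  then obtain S where S: "\<forall>t\<in>S. is_LA_term A 2 t" "Y1 \<union> Y2 = VG G 2 S"
    unfolding LA_algebraic_def by blast
  define Z where "Z = {u \<in> carrier G. \<forall>\<phi>\<in>A. u \<otimes>\<^bsub>G\<^esub> \<phi> b = \<phi> b \<otimes>\<^bsub>G\<^esub> u}"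
  have Zsub: "Z \<subseteq> carrier G" by (auto simp: Z_def)
  have Z1: "\<one>\<^bsub>G\<^esub> \<in> Z" using A_closed b by (auto simp: Z_def)
  have Zm: "\<And>x y. x \<in> Z \<Longrightarrow> y \<in> Z \<Longrightarrow> x \<otimes>\<^bsub>G\<^esub> y \<in> Z"
  proof -
    fix x y assume xy: "x \<in> Z" "y \<in> Z"
    show "x \<otimes>\<^bsub>G\<^esub> y \<in> Z" unfolding Z_def
    proof (intro CollectI conjI ballI)
      show "x \<otimes>\<^bsub>G\<^esub> y \<in> carrier G" using xy by (auto simp: Z_def)
      fix \<phi> assume p: "\<phi> \<in> A"
      have c: "\<phi> b \<in> carrier G" using A_closed p b by blast
      have "x \<otimes>\<^bsub>G\<^esub> y \<otimes>\<^bsub>G\<^esub> \<phi> b = x \<otimes>\<^bsub>G\<^esub> (y \<otimes>\<^bsub>G\<^esub> \<phi> b)" using xy c by (auto simp: Z_def m_assoc)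
      also have "\<dots> = x \<otimes>\<^bsub>G\<^esub> (\<phi> b \<otimes>\<^bsub>G\<^esub> y)" using xy p by (auto simp: Z_def)
      also have "\<dots> = (x \<otimes>\<^bsub>G\<^esub> \<phi> b) \<otimes>\<^bsub>G\<^esub> y" using xy c by (auto simp: Z_def m_assoc)
      also have "\<dots> = (\<phi> b \<otimes>\<^bsub>G\<^esub> x) \<otimes>\<^bsub>G\<^esub> y" using xy p by (auto simp: Z_def)
      also have "\<dots> = \<phi> b \<otimes>\<^bsub>G\<^esub> (x \<otimes>\<^bsub>G\<^esub> y)" using xy c by (auto simp: Z_def m_assoc)
      finally show "x \<otimes>\<^bsub>G\<^esub> y \<otimes>\<^bsub>G\<^esub> \<phi> b = \<phi> b \<otimes>\<^bsub>G\<^esub> (x \<otimes>\<^bsub>G\<^esub> y)" .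
    qed
  qed
  have Zi: "inv\<^bsub>G\<^esub> x \<in> Z" if "x \<in> Z" for x
  proof -
    have c: "x \<in> carrier G" using that by (simp add: Z_def)
    have "inv\<^bsub>G\<^esub> x \<otimes>\<^bsub>G\<^esub> \<phi> b = \<phi> b \<otimes>\<^bsub>G\<^esub> inv\<^bsub>G\<^esub> x" if p: "\<phi> \<in> A" for \<phi>
      using comm_inv[OF grp c A_closed[OF p b(1)]] p \<open>x \<in> Z\<close> by (simp add: Z_def)
    then show ?thesis using c by (simp add: Z_def)
  qed
  have Za: "\<And>x \<psi>. x \<in> set [a, \<one>\<^bsub>G\<^esub>] \<Longrightarrow> \<psi> \<in> A \<Longrightarrow> \<psi> x \<in> Z"
  proof -
    fix x \<psi> assume x: "x \<in> set [a, \<one>\<^bsub>G\<^esub>]" and q: "\<psi> \<in> A"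
    show "\<psi> x \<in> Z"
    proof (cases "x = a")
      case True
      show ?thesis unfolding Z_def True
      proof (intro CollectI conjI ballI)
        show "\<psi> a \<in> carrier G" using A_closed q a by blast
        fix \<phi> assume p: "\<phi> \<in> A"
        obtain \<chi> where c: "\<chi> \<in> A" "\<forall>x\<in>carrier G. \<psi> (\<chi> x) = \<phi> x"
          using A_solve[OF p q] by blast
        have cb: "\<chi> b \<in> carrier G" using A_closed c b by blast
        have "a \<otimes>\<^bsub>G\<^esub> \<chi> b = \<chi> b \<otimes>\<^bsub>G\<^esub> a"
          using ab c(1) comm_of_commutator[OF grp a(1) cb] by blast
        then have "\<psi> (a \<otimes>\<^bsub>G\<^esub> \<chi> b) = \<psi> (\<chi> b \<otimes>\<^bsub>G\<^esub> a)" by simp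
        then show "\<psi> a \<otimes>\<^bsub>G\<^esub> \<phi> b = \<phi> b \<otimes>\<^bsub>G\<^esub> \<psi> a"
          using A_mult[OF q] a cb c(2) b by simp
      qed
    next
      case False
      then have "x = \<one>\<^bsub>G\<^esub>" using x by simp
      then show ?thesis using A_one[OF q] Z1 by simp
    qed
  qed
  have tA: "\<And>t. tvars t \<subseteq> {..<2} \<Longrightarrow> tfuns t \<subseteq> A \<Longrightarrow> teval G [a, \<one>\<^bsub>G\<^esub>] t \<in> Z"
    by (rule teval_Q_id[OF Zsub Z1 Zm Zi]) (use a Za in auto)
  have tB: "\<And>t u. u \<in> Z \<Longrightarrow> tvars t \<subseteq> {..<2} \<Longrightarrow> tfuns t \<subseteq> A \<Longrightarrow>
     u \<otimes>\<^bsub>G\<^esub> teval G [\<one>\<^bsub>G\<^esub>, b] t = teval G [\<one>\<^bsub>G\<^esub>, b] t \<otimes>\<^bsub>G\<^esub> u"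
  proof -
    fix t u assume u: "u \<in> Z" and t: "tvars t \<subseteq> {..<2}" "tfuns t \<subseteq> A"
    define Q where "Q = {v \<in> carrier G. u \<otimes>\<^bsub>G\<^esub> v = v \<otimes>\<^bsub>G\<^esub> u}"
    have uc: "u \<in> carrier G" using u Zsub by blast
    have "teval G [\<one>\<^bsub>G\<^esub>, b] t \<in> Q"
    proof (rule teval_Q_id)
      show "Q \<subseteq> carrier G" by (auto simp: Q_def)
      show "\<one>\<^bsub>G\<^esub> \<in> Q" using uc by (simp add: Q_def)
      show "x \<otimes>\<^bsub>G\<^esub> y \<in> Q" if "x \<in> Q" "y \<in> Q" for x y
      proof -
        have c: "x \<in> carrier G" "y \<in> carrier G" "u \<otimes>\<^bsub>G\<^esub> x = x \<otimes>\<^bsub>G\<^esub> u" "u \<otimes>\<^bsub>G\<^esub> y = y \<otimes>\<^bsub>G\<^esub> u"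
          using that by (auto simp: Q_def)
        have "u \<otimes>\<^bsub>G\<^esub> (x \<otimes>\<^bsub>G\<^esub> y) = (u \<otimes>\<^bsub>G\<^esub> x) \<otimes>\<^bsub>G\<^esub> y" using c uc by (metis m_assoc)
        also have "\<dots> = (x \<otimes>\<^bsub>G\<^esub> u) \<otimes>\<^bsub>G\<^esub> y" using c by simp
        also have "\<dots> = x \<otimes>\<^bsub>G\<^esub> (u \<otimes>\<^bsub>G\<^esub> y)" using c uc by (metis m_assoc)
        also have "\<dots> = x \<otimes>\<^bsub>G\<^esub> (y \<otimes>\<^bsub>G\<^esub> u)" using c by simp
        also have "\<dots> = (x \<otimes>\<^bsub>G\<^esub> y) \<otimes>\<^bsub>G\<^esub> u" using c uc by (metis m_assoc)
        finally show ?thesis using c by (simp add: Q_def)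
      qed
      show "inv\<^bsub>G\<^esub> x \<in> Q" if "x \<in> Q" for x
      proof -
        have c: "x \<in> carrier G" "x \<otimes>\<^bsub>G\<^esub> u = u \<otimes>\<^bsub>G\<^esub> x" using that by (auto simp: Q_def)
        have "inv\<^bsub>G\<^esub> x \<otimes>\<^bsub>G\<^esub> u = u \<otimes>\<^bsub>G\<^esub> inv\<^bsub>G\<^esub> x" using comm_inv[OF grp c(1) uc c(2)] .
        then show ?thesis using c by (simp add: Q_def)
      qed
      show "set [\<one>\<^bsub>G\<^esub>, b] \<subseteq> carrier G" using b by simp
      show "\<psi> x \<in> Q" if x: "x \<in> set [\<one>\<^bsub>G\<^esub>, b]" and q: "\<psi> \<in> A" for x \<psi>
      proof -
        have "x = \<one>\<^bsub>G\<^esub> \<or> x = b" using x by simp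
        then show ?thesis
        proof
          assume "x = \<one>\<^bsub>G\<^esub>"
          then show ?thesis using A_one[OF q] uc by (simp add: Q_def)
        next
          assume "x = b"
          then show ?thesis using u q A_closed[OF q b(1)] by (simp add: Q_def Z_def)
        qed
      qed
      show "tvars t \<subseteq> {..<length [\<one>\<^bsub>G\<^esub>, b]}" using t by (simp add: numeral_2_eq_2)
      show "tfuns t \<subseteq> A" using t by simp
    qed
    then show "u \<otimes>\<^bsub>G\<^esub> teval G [\<one>\<^bsub>G\<^esub>, b] t = teval G [\<one>\<^bsub>G\<^esub>, b] t \<otimes>\<^bsub>G\<^esub> u" by (simp add: Q_def)
  qed
  have clA: "\<And>t. tvars t \<subseteq> {..<2} \<Longrightarrow> tfuns t \<subseteq> A \<Longrightarrow> teval G [a, \<one>\<^bsub>G\<^esub>] t \<in> carrier G"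
    by (rule teval_closed) (use a in \<open>auto simp: numeral_2_eq_2\<close>)
  have clB: "\<And>t. tvars t \<subseteq> {..<2} \<Longrightarrow> tfuns t \<subseteq> A \<Longrightarrow> teval G [\<one>\<^bsub>G\<^esub>, b] t \<in> carrier G"
    by (rule teval_closed) (use b in \<open>auto simp: numeral_2_eq_2\<close>)
  have split: "tvars t \<subseteq> {..<2} \<Longrightarrow> tfuns t \<subseteq> A \<Longrightarrow>
     teval G [a, b] t = teval G [a, \<one>\<^bsub>G\<^esub>] t \<otimes>\<^bsub>G\<^esub> teval G [\<one>\<^bsub>G\<^esub>, b] t" for t
  proof (induction t)
    case (Var i)
    then have "i = 0 \<or> i = 1" by auto
    then show ?case using a b by auto
  next
    case One then show ?case by simp
  next
    case (Mul s t)
    let ?x1 = "teval G [a, \<one>\<^bsub>G\<^esub>] s" and ?y1 = "teval G [\<one>\<^bsub>G\<^esub>, b] s"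
    let ?x2 = "teval G [a, \<one>\<^bsub>G\<^esub>] t" and ?y2 = "teval G [\<one>\<^bsub>G\<^esub>, b] t"
    have c: "?x1 \<in> carrier G" "?y1 \<in> carrier G" "?x2 \<in> carrier G" "?y2 \<in> carrier G"
      using Mul.prems clA clB by auto
    have comm: "?x2 \<otimes>\<^bsub>G\<^esub> ?y1 = ?y1 \<otimes>\<^bsub>G\<^esub> ?x2" using tB tA Mul.prems by simp
    have "teval G [a, b] (Mul s t) = (?x1 \<otimes>\<^bsub>G\<^esub> ?y1) \<otimes>\<^bsub>G\<^esub> (?x2 \<otimes>\<^bsub>G\<^esub> ?y2)" using Mul by simp
    also have "\<dots> = ?x1 \<otimes>\<^bsub>G\<^esub> (?y1 \<otimes>\<^bsub>G\<^esub> ?x2) \<otimes>\<^bsub>G\<^esub> ?y2" using c by (simp add: m_assoc)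
    also have "\<dots> = ?x1 \<otimes>\<^bsub>G\<^esub> (?x2 \<otimes>\<^bsub>G\<^esub> ?y1) \<otimes>\<^bsub>G\<^esub> ?y2" using comm by simp
    also have "\<dots> = (?x1 \<otimes>\<^bsub>G\<^esub> ?x2) \<otimes>\<^bsub>G\<^esub> (?y1 \<otimes>\<^bsub>G\<^esub> ?y2)" using c by (simp add: m_assoc)
    finally show ?case by simp
  next
    case (Inv t)
    let ?x = "teval G [a, \<one>\<^bsub>G\<^esub>] t" and ?y = "teval G [\<one>\<^bsub>G\<^esub>, b] t"
    have c: "?x \<in> carrier G" "?y \<in> carrier G" using Inv.prems clA clB by auto
    have comm: "?x \<otimes>\<^bsub>G\<^esub> ?y = ?y \<otimes>\<^bsub>G\<^esub> ?x" using tB tA Inv.prems by simp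
    have "teval G [a, b] (Inv t) = inv\<^bsub>G\<^esub> (?x \<otimes>\<^bsub>G\<^esub> ?y)" using Inv by simp
    also have "\<dots> = inv\<^bsub>G\<^esub> (?y \<otimes>\<^bsub>G\<^esub> ?x)" using comm by simp
    also have "\<dots> = inv\<^bsub>G\<^esub> ?x \<otimes>\<^bsub>G\<^esub> inv\<^bsub>G\<^esub> ?y" using c by (simp add: inv_mult_group)
    finally show ?case by simp
  next
    case (App f t)
    have c: "teval G [a, \<one>\<^bsub>G\<^esub>] t \<in> carrier G" "teval G [\<one>\<^bsub>G\<^esub>, b] t \<in> carrier G"
      using App.prems clA clB by auto
    have f: "f \<in> A" using App.prems by simp
    show ?case using App A_mult[OF f c] by simp
  qed
  have "[\<one>\<^bsub>G\<^esub>, b] \<in> Y1" "[a, \<one>\<^bsub>G\<^esub>] \<in> Y2" using a b by (auto simp: Y1_def Y2_def VG_def Gpow_def)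
  then have in1: "[\<one>\<^bsub>G\<^esub>, b] \<in> VG G 2 S" and in2: "[a, \<one>\<^bsub>G\<^esub>] \<in> VG G 2 S" using S(2) by auto
  have "\<forall>t\<in>S. teval G [a, b] t = \<one>\<^bsub>G\<^esub>"
  proof
    fix t assume t: "t \<in> S"
    then have tt: "tvars t \<subseteq> {..<2}" "tfuns t \<subseteq> A" using S(1) by (auto simp: is_LA_term_def)
    have "teval G [\<one>\<^bsub>G\<^esub>, b] t = \<one>\<^bsub>G\<^esub>" "teval G [a, \<one>\<^bsub>G\<^esub>] t = \<one>\<^bsub>G\<^esub>" using in1 in2 t by (auto simp: VG_def)
    then show "teval G [a, b] t = \<one>\<^bsub>G\<^esub>" using split[OF tt] by simp
  qed
  then have "[a, b] \<in> VG G 2 S" using a b by (auto simp: VG_def Gpow_def)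
  then have "[a, b] \<in> Y1 \<union> Y2" using S(2) by auto
  then show False using a b by (auto simp: Y1_def Y2_def VG_def)
qed

end

theorem theorem3:
  fixes G :: "('a, 'b) monoid_scheme" and A :: "('a \<Rightarrow> 'a) set"
  assumes "group G"
    and "subgroup A (AutoGroup G)"
  shows "LA_equational_domain G A \<longleftrightarrow>
         \<not> (\<exists>a\<in>carrier G. \<exists>b\<in>carrier G. a \<noteq> \<one>\<^bsub>G\<^esub> \<and> b \<noteq> \<one>\<^bsub>G\<^esub> \<and>
              (\<forall>\<phi>\<in>A. commutator G a (\<phi> b) = \<one>\<^bsub>G\<^esub>))"
  using nozd_ED[OF assms] zd_not_ED[OF assms] by blast

end
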